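(* Let $G$ be a group with generating set $S$ not containing the identity, and let $d_C$ be the cardinal metric on $G$ with respect to $S$. Then $\{L_a\circ\tau : a\in G,\ \tau\in\mathrm{Aut}(G,S)\}\subseteq \mathrm{Iso}(G,d_C)$, where $L_a(g)=ag$, $\mathrm{Aut}(G,S)$ is the group of automorphisms $\tau$ of $G$ with $\tau(S)=S$, and $\mathrm{Iso}(G,d_C)$ is the set of isometries of $(G,d_C)$ onto itself.
   Context: The cardinal norm is $\|x\| = \min\{|A| : A\subseteq S,\ x\in\langle A\rangle\}$, where $\langle A\rangle$ is the subgroup generated by $A$, and $d_C(g,h)=\|g^{-1}h\|$. *)

theory Defs
  imports "HOL-Algebra.Algebra"
begin

text \<open>Elements of a generated subgroup
  are finite products, so the minimum is always attained by a finite A; we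
  therefore range over finite A, where card is the genuine cardinality.\<close>
definition cardinal_norm :: "('a, 'b) monoid_scheme \<Rightarrow> 'a set \<Rightarrow> 'a \<Rightarrow> nat" where
  "cardinal_norm G S x =
     (LEAST n. \<exists>A. A \<subseteq> S \<and> finite A \<and> card A = n \<and> x \<in> generate G A)"

definition cardinal_dist :: "('a, 'b) monoid_scheme \<Rightarrow> 'a set \<Rightarrow> 'a \<Rightarrow> 'a \<Rightarrow> nat" where
  "cardinal_dist G S g h = cardinal_norm G S (inv\<^bsub>G\<^esub> g \<otimes>\<^bsub>G\<^esub> h)"

definition Aut_S :: "('a, 'b) monoid_scheme \<Rightarrow> 'a set \<Rightarrow> ('a \<Rightarrow> 'a) set" where
  "Aut_S G S = {\<tau>. \<tau> \<in> iso G G \<and> \<tau> ` S = S}"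

definition left_transl :: "('a, 'b) monoid_scheme \<Rightarrow> 'a \<Rightarrow> 'a \<Rightarrow> 'a" where
  "left_transl G a = (\<lambda>g. a \<otimes>\<^bsub>G\<^esub> g)"

definition isometries :: "'a set \<Rightarrow> ('a \<Rightarrow> 'a \<Rightarrow> nat) \<Rightarrow> ('a \<Rightarrow> 'a) set" where
  "isometries M \<delta> = {f. bij_betw f M M \<and> (\<forall>x\<in>M. \<forall>y\<in>M. \<delta> (f x) (f y) = \<delta> x y)}"

end

theory Submission
  imports Defs
begin

lemma norm_aut:
  fixes G (structure) and S :: "'a set"
  assumes gr: "group G" and SG: "S \<subseteq> carrier G" and t: "\<tau> \<in> iso G G" and tS: "\<tau> ` S = S"
    and z: "z \<in> carrier G"
  shows "cardinal_norm G S (\<tau> z) = cardinal_norm G S z"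
proof -
  interpret group_hom G G \<tau> using gr t unfolding group_hom_def group_hom_axioms_def iso_def by auto
  have bij: "bij_betw \<tau> (carrier G) (carrier G)" using t by (simp add: iso_def)
  hence inj: "inj_on \<tau> (carrier G)" by (simp add: bij_betw_def)
  have eq: "(\<exists>A. A \<subseteq> S \<and> finite A \<and> card A = n \<and> \<tau> z \<in> generate G A) \<longleftrightarrow>
            (\<exists>A. A \<subseteq> S \<and> finite A \<and> card A = n \<and> z \<in> generate G A)" for n
  proof
    assume "\<exists>A. A \<subseteq> S \<and> finite A \<and> card A = n \<and> \<tau> z \<in> generate G A"
    then obtain B where B: "B \<subseteq> S" "finite B" "card B = n" "\<tau> z \<in> generate G B" by blast
    define A where "A = {s\<in>S. \<tau> s \<in> B}"
    have AS: "A \<subseteq> S" unfolding A_def by auto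
    have img: "\<tau> ` A = B" unfolding A_def using B(1) tS by auto
    have injA: "inj_on \<tau> A" using inj AS SG by (meson inj_on_subset subset_trans)
    have fA: "finite A" using img injA B(2) finite_imageD by blast
    have cA: "card A = n" using card_image[OF injA] img B(3) by simp
    have "generate G B = \<tau> ` generate G A" using generate_img[of A] AS SG img by auto
    then obtain w where w: "w \<in> generate G A" "\<tau> z = \<tau> w" using B(4) by auto
    have "w \<in> carrier G" using G.generate_in_carrier[of A] AS SG w(1) by auto
    hence "z = w" using inj z w(2) by (meson inj_onD)
    thus "\<exists>A. A \<subseteq> S \<and> finite A \<and> card A = n \<and> z \<in> generate G A" using AS fA cA w(1) by blast
  next
    assume "\<exists>A. A \<subseteq> S \<and> finite A \<and> card A = n \<and> z \<in> generate G A"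
    then obtain A where A: "A \<subseteq> S" "finite A" "card A = n" "z \<in> generate G A" by blast
    have injA: "inj_on \<tau> A" using inj A(1) SG by (meson inj_on_subset subset_trans)
    have "generate G (\<tau> ` A) = \<tau> ` generate G A" using generate_img[of A] A(1) SG by auto
    hence "\<tau> z \<in> generate G (\<tau> ` A)" using A(4) by auto
    moreover have "\<tau> ` A \<subseteq> S" using A(1) tS by auto
    moreover have "card (\<tau> ` A) = n" using card_image[OF injA] A(3) by simp
    ultimately show "\<exists>A. A \<subseteq> S \<and> finite A \<and> card A = n \<and> \<tau> z \<in> generate G A"
      using A(2) by blast
  qed
  show ?thesis unfolding cardinal_norm_def using eq by simp
qed

theorem mainTheorem12:
  fixes G (structure) and S :: "'a set"
  assumes "group G"
    and "S \<subseteq> carrier G"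
    and "generate G S = carrier G"
    and "\<one>\<^bsub>G\<^esub> \<notin> S"
  shows "{left_transl G a \<circ> \<tau> | a \<tau>. a \<in> carrier G \<and> \<tau> \<in> Aut_S G S}
           \<subseteq> isometries (carrier G) (cardinal_dist G S)"
proof
  fix f assume "f \<in> {left_transl G a \<circ> \<tau> | a \<tau>. a \<in> carrier G \<and> \<tau> \<in> Aut_S G S}"
  then obtain a \<tau> where f: "f = left_transl G a \<circ> \<tau>" and a: "a \<in> carrier G"
    and t: "\<tau> \<in> iso G G" and tS: "\<tau> ` S = S" by (auto simp: Aut_S_def)
  interpret group G by fact
  interpret group_hom G G \<tau> using assms(1) t unfolding group_hom_def group_hom_axioms_def iso_def by auto
  have bij: "bij_betw \<tau> (carrier G) (carrier G)" using t by (simp add: iso_def)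
  have bijL: "bij_betw (left_transl G a) (carrier G) (carrier G)"
    unfolding bij_betw_def inj_on_def left_transl_def
  proof (intro conjI ballI impI)
    show "(\<otimes>) a ` carrier G = carrier G"
    proof
      show "(\<otimes>) a ` carrier G \<subseteq> carrier G" using a by auto
      show "carrier G \<subseteq> (\<otimes>) a ` carrier G"
      proof
        fix y assume y: "y \<in> carrier G"
        have "y = a \<otimes> (inv a \<otimes> y)" using a y by (simp add: m_assoc[symmetric])
        thus "y \<in> (\<otimes>) a ` carrier G" using a y by blast
      qed
    qed
  qed (use a in auto)
  have "bij_betw f (carrier G) (carrier G)" unfolding f using bij bijL by (rule bij_betw_trans)
  moreover have "cardinal_dist G S (f x) (f y) = cardinal_dist G S x y"
    if x: "x \<in> carrier G" and y: "y \<in> carrier G" for x y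
  proof -
    have tx: "\<tau> x \<in> carrier G" and ty: "\<tau> y \<in> carrier G" using x y by auto
    have "inv (a \<otimes> \<tau> x) \<otimes> (a \<otimes> \<tau> y) = inv (\<tau> x) \<otimes> \<tau> y"
      proof -
      have "inv a \<otimes> (a \<otimes> \<tau> y) = \<tau> y" using a ty by (simp add: m_assoc[symmetric])
      thus ?thesis using a tx ty by (simp add: inv_mult_group m_assoc)
    qed
    also have "\<dots> = \<tau> (inv x \<otimes> y)" using x y by simp
    finally have "inv (f x) \<otimes> f y = \<tau> (inv x \<otimes> y)" by (simp add: f left_transl_def)
    thus ?thesis unfolding cardinal_dist_def
      using norm_aut[OF assms(1) assms(2) t tS, of "inv x \<otimes> y"] x y by simp
  qed
  ultimately show "f \<in> isometries (carrier G) (cardinal_dist G S)" by (simp add: isometries_def)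
qed

end
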